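(* Every $K_4$-free disk graph is $11$-degenerate.
   Context: A disk graph is the intersection graph of a finite set of closed disks in $\mathbb{R}^2$. A graph is $K_4$-free if it contains no complete subgraph on $4$ vertices. A graph is $c$-degenerate if its vertices can be ordered $v_1,\dots,v_n$ so that each $v_i$ has at most $c$ neighbours among $v_1,\dots,v_{i-1}$. *)

theory Defs
  imports "HOL-Analysis.Analysis"
begin

text \<open>A closed disk in the plane is represented by a pair (centre, radius) with positive radius.\<close>

type_synonym disk = "(real^2) \<times> real"

definition disk_set :: "disk \<Rightarrow> (real^2) set" where
  "disk_set d = cball (fst d) (snd d)"

definition disk_adj :: "disk \<Rightarrow> disk \<Rightarrow> bool" where
  "disk_adj d e \<longleftrightarrow> d \<noteq> e \<and> disk_set d \<inter> disk_set e \<noteq> {}"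

definition K4_free :: "'a set \<Rightarrow> ('a \<Rightarrow> 'a \<Rightarrow> bool) \<Rightarrow> bool" where
  "K4_free V E \<longleftrightarrow> \<not> (\<exists>S \<subseteq> V. card S = 4 \<and> (\<forall>x\<in>S. \<forall>y\<in>S. x \<noteq> y \<longrightarrow> E x y))"

definition degenerate :: "nat \<Rightarrow> 'a set \<Rightarrow> ('a \<Rightarrow> 'a \<Rightarrow> bool) \<Rightarrow> bool" where
  "degenerate c V E \<longleftrightarrow> (\<exists>vs. distinct vs \<and> set vs = V \<and>
     (\<forall>i < length vs. card {j. j < i \<and> E (vs ! i) (vs ! j)} \<le> c))"

end

theory Submission
  imports Defs
begin


definition dir :: "real \<Rightarrow> real^2" where "dir t = vector [cos t, sin t]"

lemma inner2: "(x::real^2) \<bullet> y = x$1 * y$1 + x$2 * y$2"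
  by (simp add: inner_vec_def sum_2)

lemma dir_inner: "dir a \<bullet> dir b = cos (a - b)"
  by (simp add: inner2 dir_def cos_diff)

lemma dir_norm: "norm (dir a) = 1"
proof -
  have "norm (dir a) ^ 2 = 1" by (simp add: power2_norm_eq_inner dir_inner)
  thus ?thesis using norm_ge_zero[of "dir a"] by (simp add: power2_eq_1_iff)
qed

lemma close_norm:
  assumes "0 \<le> s" "s \<le> 2*r" "0 \<le> t" "t \<le> 2*r" "cos (a - b) \<ge> 1/2"
  shows "norm (s *\<^sub>R dir a - t *\<^sub>R dir b) \<le> 2*r"
proof -
  have cba: "cos (b - a) = cos (a - b)" by (metis cos_minus minus_diff_eq)
  have "norm (s *\<^sub>R dir a - t *\<^sub>R dir b) ^ 2
     = (s *\<^sub>R dir a - t *\<^sub>R dir b) \<bullet> (s *\<^sub>R dir a - t *\<^sub>R dir b)"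
    by (rule power2_norm_eq_inner)
  also have "\<dots> = s * s * (dir a \<bullet> dir a) - s * t * (dir a \<bullet> dir b) - t * s * (dir b \<bullet> dir a) + t * t * (dir b \<bullet> dir b)"
    unfolding inner_diff_left inner_diff_right inner_scaleR_left inner_scaleR_right by (simp add: algebra_simps)
  also have "\<dots> = s^2 + t^2 - 2 * s * t * cos (a - b)"
    unfolding dir_inner cba by (simp add: power2_eq_square)
  also have "\<dots> \<le> s^2 + t^2 - s * t"
  proof -
    have "s * t * 1 \<le> s * t * (2 * cos (a - b))"
      using assms by (intro mult_left_mono) auto
    thus ?thesis by simp
  qed
  also have "\<dots> \<le> (2*r)^2"
  proof (cases "s \<le> t")
    case True
    have "s * s \<le> s * t" using True assms by (intro mult_left_mono) auto
    moreover have "t^2 \<le> (2*r)^2" using assms by (intro power_mono) auto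
    ultimately show ?thesis by (simp add: power2_eq_square)
  next
    case False
    have "t * t \<le> t * s" using False assms by (intro mult_left_mono) auto
    moreover have "s^2 \<le> (2*r)^2" using assms by (intro power_mono) auto
    ultimately show ?thesis by (simp add: power2_eq_square mult.commute)
  qed
  finally have sq: "norm (s *\<^sub>R dir a - t *\<^sub>R dir b) ^ 2 \<le> (2*r)^2" .
  show ?thesis by (rule power2_le_imp_le[OF sq]) (use assms in auto)
qed

lemma pick:
  fixes c a :: "real^2"
  assumes "0 < r" "r \<le> R" "dist c a \<le> r + R"
  shows "\<exists>t s. 0 \<le> t \<and> t < 2*pi \<and> 0 \<le> s \<and> s \<le> 2*r \<and> dist a (c + s *\<^sub>R dir t) \<le> R - r"
proof (cases "a = c")
  case True
  show ?thesis
    by (rule exI[of _ 0], rule exI[of _ 0]) (use True assms in auto)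
next
  case False
  define n where "n = norm (a - c)"
  have n: "n > 0" using False by (simp add: n_def)
  define u where "u = (1/n) *\<^sub>R (a - c)"
  have "norm u = 1" using n by (simp add: u_def n_def)
  hence "(u$1)^2 + (u$2)^2 = 1"
    by (metis power2_norm_eq_inner inner2 power2_eq_square one_power2)
  then obtain t where t: "0 \<le> t" "t < 2*pi" "u$1 = cos t" "u$2 = sin t"
    using sincos_total_2pi by metis
  have ud: "u = dir t" using t by (simp add: vec_eq_iff forall_2 dir_def)
  have ac: "a - c = n *\<^sub>R dir t" using n by (simp add: u_def flip: ud)
  define s where "s = max 0 (n - (R - r))"
  have ndc: "n = dist c a" by (simp add: n_def dist_norm norm_minus_commute)
  have "a - (c + s *\<^sub>R dir t) = (n - s) *\<^sub>R dir t"
    using ac by (simp add: algebra_simps)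
  hence "dist a (c + s *\<^sub>R dir t) = \<bar>n - s\<bar>"
    by (simp add: dist_norm dir_norm)
  also have "\<dots> \<le> R - r" using n assms by (simp add: s_def)
  finally show ?thesis
    using t assms ndc by (intro exI[of _ t] exI[of _ s]) (auto simp: s_def)
qed

lemma meet:
  fixes a b c :: "real^2"
  assumes "0 \<le> s" "s \<le> 2*r" "0 \<le> t" "t \<le> 2*r" "cos (x - y) \<ge> 1/2"
    "dist a (c + s *\<^sub>R dir x) \<le> R - r" "dist b (c + t *\<^sub>R dir y) \<le> R' - r"
  shows "cball a R \<inter> cball b R' \<noteq> {}"
proof -
  define p where "p = c + s *\<^sub>R dir x"
  define q where "q = c + t *\<^sub>R dir y"
  have "dist p q \<le> 2*r"
    using close_norm[OF assms(1-5)] by (simp add: p_def q_def dist_norm algebra_simps)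
  define m where "m = midpoint p q"
  have "dist p m = dist p q / 2" "dist q m = dist p q / 2"
    by (simp_all add: m_def dist_midpoint)
  hence "dist a m \<le> R" "dist b m \<le> R'"
    using assms(6,7) \<open>dist p q \<le> 2*r\<close> dist_triangle[of a m p] dist_triangle[of b m q]
    unfolding p_def[symmetric] q_def[symmetric] by (auto simp: dist_commute)
  thus ?thesis by auto
qed


lemma cos_half: "-pi/3 \<le> u \<Longrightarrow> u \<le> pi/3 \<Longrightarrow> cos u \<ge> 1/2"
proof -
  assume a: "-pi/3 \<le> u" "u \<le> pi/3"
  have "cos (pi/3) \<le> cos \<bar>u\<bar>"
    by (rule cos_monotone_0_pi_le) (use a in auto)
  thus ?thesis by (simp add: cos_60)
qed

lemma cos_half': "\<bar>u\<bar> \<le> pi/3 \<or> \<bar>u - 2*pi\<bar> \<le> pi/3 \<or> \<bar>u + 2*pi\<bar> \<le> pi/3 \<Longrightarrow> cos u \<ge> 1/2"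
proof -
  assume h: "\<bar>u\<bar> \<le> pi/3 \<or> \<bar>u - 2*pi\<bar> \<le> pi/3 \<or> \<bar>u + 2*pi\<bar> \<le> pi/3"
  have e1: "cos (u - 2*pi) = cos u" using cos_periodic[of "u - 2*pi"] by simp
  have e2: "cos (u + 2*pi) = cos u" by simp
  from h consider "\<bar>u\<bar> \<le> pi/3" | "\<bar>u - 2*pi\<bar> \<le> pi/3" | "\<bar>u + 2*pi\<bar> \<le> pi/3" by blast
  then show ?thesis
  proof cases
    case 1 then show ?thesis using abs_le_D1[OF 1] abs_le_D2[OF 1] by (intro cos_half) linarith+
  next
    case 2 then have "cos (u - 2*pi) \<ge> 1/2" using abs_le_D1[OF 2] abs_le_D2[OF 2] by (intro cos_half) linarith+
    then show ?thesis using e1 by simp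
  next
    case 3 then have "cos (u + 2*pi) \<ge> 1/2" using abs_le_D1[OF 3] abs_le_D2[OF 3] by (intro cos_half) linarith+
    then show ?thesis using e2 by simp
  qed
qed

lemma disk_adj_sym: "disk_adj x y = disk_adj y x"
  unfolding disk_adj_def by (metis Int_commute)

lemma K4_free_mono: "K4_free V E \<Longrightarrow> W \<subseteq> V \<Longrightarrow> K4_free W E"
proof -
  assume a: "K4_free V E" "W \<subseteq> V"
  show "K4_free W E" unfolding K4_free_def
  proof
    assume "\<exists>S\<subseteq>W. card S = 4 \<and> (\<forall>x\<in>S. \<forall>y\<in>S. x \<noteq> y \<longrightarrow> E x y)"
    then obtain S where S: "S \<subseteq> W" "card S = 4" "\<forall>x\<in>S. \<forall>y\<in>S. x \<noteq> y \<longrightarrow> E x y" by blast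
    have "S \<subseteq> V" using S(1) a(2) by (rule subset_trans)
    thus False using a(1) S(2,3) unfolding K4_free_def by blast
  qed
qed

lemma nbr_bound:
  assumes fin: "finite V" and pos: "\<forall>x\<in>V. snd x > 0" and k4: "K4_free V disk_adj"
    and dV: "d \<in> V" and mn: "\<forall>e\<in>V. snd d \<le> snd e"
  shows "card {e\<in>V. disk_adj d e} \<le> 11"
proof (rule ccontr)
  assume neg: "\<not> ?thesis"
  define N where "N = {e\<in>V. disk_adj d e}"
  have cN: "card N \<ge> 12" using neg by (simp add: N_def)
  have fN: "finite N" using fin by (simp add: N_def)
  obtain c r where d: "d = (c, r)" by (cases d)
  have r: "r > 0" using pos dV d by auto
  have ex: "\<forall>e\<in>N. \<exists>p. 0 \<le> fst p \<and> fst p < 2*pi \<and> 0 \<le> snd p \<and> snd p \<le> 2*r \<and>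
              dist (fst e) (c + snd p *\<^sub>R dir (fst p)) \<le> snd e - r"
  proof
    fix e assume e: "e \<in> N"
    then obtain z where z: "dist c z \<le> r" "dist (fst e) z \<le> snd e"
      by (auto simp: N_def disk_adj_def disk_set_def d)
    have "dist c (fst e) \<le> r + snd e"
      using z dist_triangle[of c "fst e" z] by (simp add: dist_commute)
    moreover have "r \<le> snd e" using mn e d by (auto simp: N_def)
    ultimately obtain t s where ts: "0 \<le> t" "t < 2*pi" "0 \<le> s" "s \<le> 2*r"
         "dist (fst e) (c + s *\<^sub>R dir t) \<le> snd e - r"
      using pick[OF r] by blast
    show "\<exists>p. 0 \<le> fst p \<and> fst p < 2*pi \<and> 0 \<le> snd p \<and> snd p \<le> 2*r \<and>
              dist (fst e) (c + snd p *\<^sub>R dir (fst p)) \<le> snd e - r"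
      by (rule exI[of _ "(t, s)"]) (simp add: ts)
  qed
  obtain f where f: "\<forall>e\<in>N. 0 \<le> fst (f e) \<and> fst (f e) < 2*pi \<and> 0 \<le> snd (f e) \<and> snd (f e) \<le> 2*r \<and>
              dist (fst e) (c + snd (f e) *\<^sub>R dir (fst (f e))) \<le> snd e - r"
    using bchoice[OF ex] by blast
  define \<theta> where "\<theta> e = fst (f e)" for e
  define \<sigma> where "\<sigma> e = snd (f e)" for e
  have th: "\<forall>e\<in>N. 0 \<le> \<theta> e \<and> \<theta> e < 2*pi \<and> 0 \<le> \<sigma> e \<and> \<sigma> e \<le> 2*r \<and>
              dist (fst e) (c + \<sigma> e *\<^sub>R dir (\<theta> e)) \<le> snd e - r"
    using f unfolding \<theta>_def \<sigma>_def by blast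
  have adj: "disk_adj x y" if "x \<in> N" "y \<in> N" "x \<noteq> y"
    "\<bar>\<theta> x - \<theta> y\<bar> \<le> pi/3 \<or> \<bar>\<theta> x - \<theta> y - 2*pi\<bar> \<le> pi/3 \<or> \<bar>\<theta> x - \<theta> y + 2*pi\<bar> \<le> pi/3" for x y
  proof -
    have "cos (\<theta> x - \<theta> y) \<ge> 1/2" using cos_half' that(4) by blast
    hence "cball (fst x) (snd x) \<inter> cball (fst y) (snd y) \<noteq> {}"
      using th that(1,2) by (intro meet[of "\<sigma> x" r "\<sigma> y" "\<theta> x" "\<theta> y" "fst x" c "snd x" "fst y" "snd y"]) auto
    thus ?thesis using that(3) by (simp add: disk_adj_def disk_set_def)
  qed
  have noK: False if "x \<in> N" "y \<in> N" "z \<in> N" "x \<noteq> y" "x \<noteq> z" "y \<noteq> z"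
    "disk_adj x y" "disk_adj x z" "disk_adj y z" for x y z
  proof -
    have dn: "d \<noteq> x" "d \<noteq> y" "d \<noteq> z" using that(1-3) by (auto simp: N_def disk_adj_def)
    have sub: "{d, x, y, z} \<subseteq> V" using that(1-3) dV by (auto simp: N_def)
    have c4: "card {d, x, y, z} = 4" using dn that(4-6) by simp
    have "disk_adj d x" "disk_adj d y" "disk_adj d z" using that(1-3) by (simp_all add: N_def)
    hence "\<forall>u\<in>{d, x, y, z}. \<forall>v\<in>{d, x, y, z}. u \<noteq> v \<longrightarrow> disk_adj u v"
      using that(7-9) by (simp add: disk_adj_sym)
    thus False using k4 sub c4 unfolding K4_free_def by blast
  qed
  obtain xs0 where xs0: "distinct xs0" "set xs0 = N" using finite_distinct_list[OF fN] by blast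
  define xs where "xs = sort_key \<theta> xs0"
  have xs: "distinct xs" "set xs = N" "sorted (map \<theta> xs)" using xs0 by (auto simp: xs_def)
  have len: "length xs \<ge> 12" using xs cN distinct_card by metis
  define a where "a i = \<theta> (xs ! i)" for i
  have mono: "a i \<le> a j" if "i \<le> j" "j < length xs" for i j
    using sorted_nth_mono[OF xs(3), of i j] that by (simp add: a_def)
  have inN: "xs ! i \<in> N" if "i < length xs" for i using that xs(2) nth_mem by blast
  have rng: "0 \<le> a i \<and> a i < 2*pi" if "i < length xs" for i
    using th inN[OF that] by (simp add: a_def)
  have dst: "xs ! i \<noteq> xs ! j" if "i < length xs" "j < length xs" "i \<noteq> j" for i j
    using xs(1) that nth_eq_iff_index_eq by blast
  have adjI: "disk_adj (xs ! i) (xs ! j)" if "i < length xs" "j < length xs" "i \<noteq> j"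
    "\<bar>a i - a j\<bar> \<le> pi/3 \<or> \<bar>a i - a j - 2*pi\<bar> \<le> pi/3 \<or> \<bar>a i - a j + 2*pi\<bar> \<le> pi/3" for i j
    using adj[OF inN[OF that(1)] inN[OF that(2)] dst[OF that(1-3)]] that(4) unfolding a_def by blast
  have adjI0: "disk_adj (xs ! i) (xs ! j)" if "i < length xs" "j < length xs" "i \<noteq> j"
    "-pi/3 \<le> a i - a j" "a i - a j \<le> pi/3" for i j
  proof -
    have "\<bar>a i - a j\<bar> \<le> pi/3" using that(4,5) by (intro abs_leI) linarith+
    thus ?thesis using adjI[OF that(1-3)] by blast
  qed
  have adjI2: "disk_adj (xs ! i) (xs ! j)" if "i < length xs" "j < length xs" "i \<noteq> j"
    "-pi/3 \<le> a i - a j - 2*pi" "a i - a j - 2*pi \<le> pi/3" for i j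
  proof -
    have "\<bar>a i - a j - 2*pi\<bar> \<le> pi/3" using that(4,5) by (intro abs_leI) linarith+
    thus ?thesis using adjI[OF that(1-3)] by blast
  qed
  have gap: "a (i+2) - a i > pi/3" if "i + 2 < length xs" for i
  proof (rule ccontr)
    assume g: "\<not> ?thesis"
    have m1: "a i \<le> a (i+1)" "a (i+1) \<le> a (i+2)" using mono that by auto
    show False
    proof (rule noK[of "xs ! i" "xs ! (i+1)" "xs ! (i+2)"])
      show "xs ! i \<in> N" "xs ! (i+1) \<in> N" "xs ! (i+2) \<in> N" using inN that by auto
      show "xs ! i \<noteq> xs ! (i+1)" "xs ! i \<noteq> xs ! (i+2)" "xs ! (i+1) \<noteq> xs ! (i+2)"
        using dst that by auto
      show "disk_adj (xs ! i) (xs ! (i+1))"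
        by (rule adjI0) (use that m1 g in linarith)+
      show "disk_adj (xs ! i) (xs ! (i+2))"
        by (rule adjI0) (use that m1 g in linarith)+
      show "disk_adj (xs ! (i+1)) (xs ! (i+2))"
        by (rule adjI0) (use that m1 g in linarith)+
    qed
  qed
  have wrap: "a 0 + 2*pi - a 10 > pi/3"
  proof (rule ccontr)
    assume g: "\<not> ?thesis"
    have l: "0 < length xs" "10 < length xs" "11 < length xs" using len by auto
    have m1: "a 10 \<le> a 11" "a 0 \<le> a 10" using mono[OF _ l(3), of 10] mono[OF _ l(2), of 0] by auto
    have r0: "0 \<le> a 0" "a 11 < 2*pi" using rng[OF l(1)] rng[OF l(3)] by auto
    show False
    proof (rule noK[of "xs ! 10" "xs ! 11" "xs ! 0"])
      show "xs ! 10 \<in> N" "xs ! 11 \<in> N" "xs ! 0 \<in> N" using inN l by blast+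
      show "xs ! 10 \<noteq> xs ! 11" "xs ! 10 \<noteq> xs ! 0" "xs ! 11 \<noteq> xs ! 0"
        using dst[OF l(2) l(3)] dst[OF l(2) l(1)] dst[OF l(3) l(1)] by simp_all
      show "disk_adj (xs ! 10) (xs ! 11)"
        by (rule adjI0) (use l m1 g r0 in linarith)+
      show "disk_adj (xs ! 10) (xs ! 0)"
        by (rule adjI2) (use l m1 g r0 in linarith)+
      show "disk_adj (xs ! 11) (xs ! 0)"
        by (rule adjI2) (use l m1 g r0 in linarith)+
    qed
  qed
  have "a (0+2) - a 0 > pi/3" "a (2+2) - a 2 > pi/3" "a (4+2) - a 4 > pi/3" "a (6+2) - a 6 > pi/3" "a (8+2) - a 8 > pi/3"
    by (rule gap, use len in linarith)+
  moreover have e: "(0::nat)+2 = 2" "(2::nat)+2 = 4" "(4::nat)+2 = 6" "(6::nat)+2 = 8" "(8::nat)+2 = 10" by simp_all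
  ultimately have "a 2 - a 0 > pi/3" "a 4 - a 2 > pi/3" "a 6 - a 4 > pi/3" "a 8 - a 6 > pi/3" "a 10 - a 8 > pi/3"
    by (simp_all only: e)
  thus False using wrap by linarith
qed

lemma degen:
  assumes "finite V" "\<forall>x\<in>V. snd x > 0" "K4_free V disk_adj"
  shows "degenerate 11 V disk_adj"
  using assms
proof (induction V rule: finite_psubset_induct)
  case (psubset V)
  show ?case
  proof (cases "V = {}")
    case True
    show ?thesis unfolding degenerate_def by (rule exI[of _ "[]"]) (simp add: True)
  next
    case False
    define m where "m = Min (snd ` V)"
    have "m \<in> snd ` V" unfolding m_def using psubset(1) False by (intro Min_in) auto
    then obtain d where dV: "d \<in> V" and dm: "snd d = m" by auto
    have mn: "\<forall>e\<in>V. snd d \<le> snd e" unfolding dm m_def using psubset(1) by auto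
    define W where "W = V - {d}"
    have WV: "W \<subset> V" using dV by (auto simp: W_def)
    have W1: "finite W" using psubset(1) by (simp add: W_def)
    have W2: "\<forall>x\<in>W. snd x > 0" using psubset(3) by (simp add: W_def)
    have W3: "K4_free W disk_adj" using K4_free_mono[OF psubset(4)] WV by blast
    have "degenerate 11 W disk_adj"
      using psubset(2)[OF WV W2 W3] .
    then obtain vs where vs: "distinct vs" "set vs = W"
      "\<forall>i < length vs. card {j. j < i \<and> disk_adj (vs ! i) (vs ! j)} \<le> 11"
      unfolding degenerate_def by blast
    have bd: "card {e\<in>V. disk_adj d e} \<le> 11"
      using nbr_bound[OF psubset(1,3,4) dV mn] .
    show ?thesis unfolding degenerate_def
    proof (intro exI[of _ "vs @ [d]"] conjI allI impI)
      show "distinct (vs @ [d])" using vs(1,2) by (simp add: W_def)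
      show "set (vs @ [d]) = V" using vs(2) dV by (auto simp: W_def)
      fix i assume i: "i < length (vs @ [d])"
      show "card {j. j < i \<and> disk_adj ((vs @ [d]) ! i) ((vs @ [d]) ! j)} \<le> 11"
      proof (cases "i < length vs")
        case True
        have e1: "(vs @ [d]) ! i = vs ! i" using True by (simp add: nth_append)
        have e2: "(vs @ [d]) ! j = vs ! j" if "j < i" for j using that True by (simp add: nth_append)
        have "{j. j < i \<and> disk_adj ((vs @ [d]) ! i) ((vs @ [d]) ! j)} = {j. j < i \<and> disk_adj (vs ! i) (vs ! j)}"
          by (rule Collect_cong) (use e1 e2 in metis)
        thus ?thesis using vs(3) True by simp
      next
        case False
        hence il: "i = length vs" using i by simp
        have e1: "(vs @ [d]) ! i = d" using il by simp
        have e2: "(vs @ [d]) ! j = vs ! j" if "j < i" for j using that il by (simp add: nth_append)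
        have eq: "{j. j < i \<and> disk_adj ((vs @ [d]) ! i) ((vs @ [d]) ! j)} = {j. j < length vs \<and> disk_adj d (vs ! j)}"
          by (rule Collect_cong) (use e1 e2 il in metis)
        have "card {j. j < length vs \<and> disk_adj d (vs ! j)} \<le> card {e\<in>V. disk_adj d e}"
        proof (rule card_inj_on_le)
          show "inj_on (\<lambda>j. vs ! j) {j. j < length vs \<and> disk_adj d (vs ! j)}"
            using vs(1) by (simp add: inj_on_def nth_eq_iff_index_eq)
          show "(\<lambda>j. vs ! j) ` {j. j < length vs \<and> disk_adj d (vs ! j)} \<subseteq> {e\<in>V. disk_adj d e}"
          proof
            fix e assume "e \<in> (\<lambda>j. vs ! j) ` {j. j < length vs \<and> disk_adj d (vs ! j)}"
            then obtain j where j: "j < length vs" "disk_adj d (vs ! j)" "e = vs ! j" by blast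
            have "vs ! j \<in> W" using j(1) vs(2) nth_mem by blast
            thus "e \<in> {e\<in>V. disk_adj d e}" using j by (simp add: W_def)
          qed
          show "finite {e\<in>V. disk_adj d e}" using psubset(1) by simp
        qed
        thus ?thesis using eq bd by simp
      qed
    qed
  qed
qed

theorem lemma6:
  fixes D :: "disk set"
  assumes "finite D"
    and "\<forall>d\<in>D. snd d > 0"
    and "K4_free D disk_adj"
  shows "degenerate 11 D disk_adj"
  using degen[OF assms] .

end
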